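(* Let $U$ be a general quantum walk on a finite graph $G=(V,E)$ with auxiliary space of dimension $d$. Suppose there is a probability distribution $\pi$ on $V$ such that for every basis state $|a,v\rangle$ ($a\in\{1,\dots,d\}$, $v\in V$), the limit $\lim_{T\to\infty}\bar P_T(\cdot|a,v)$ exists and equals $\pi$. Then $\pi$ is the uniform distribution on $V$.
   Context: $\mathcal H=\mathcal H_A\otimes\mathcal H_V$ with orthonormal basis $|a,v\rangle$, $a\in\{1,\dots,d\}$, $v\in V$. A general quantum walk on $G$ is a unitary $U$ on $\mathcal H$ such that each $U|a,v\rangle$ is a linear combination only of $|a',v'\rangle$ with $v'$ equal to $v$ or a neighbour of $v$. $P_t(v|\alpha_0)=\sum_a|\langle a,v|U^t\alpha_0\rangle|^2$, $\bar P_T(v|\alpha_0)=\frac1T\sum_{t=0}^{T-1}P_t(v|\alpha_0)$. *)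

theory Defs
  imports "HOL-Analysis.Analysis"
begin

text \<open>Operators on the finite-dimensional Hilbert space with orthonormal basis indexed by
  a finite type 'i (here 'i = aux-index \<times> vertex); a matrix A has entries A i j = <i|A|j>.\<close>

type_synonym 'i cmat = "'i \<Rightarrow> 'i \<Rightarrow> complex"
type_synonym 'i cvec = "'i \<Rightarrow> complex"

definition mmult :: "'i::finite cmat \<Rightarrow> 'i cmat \<Rightarrow> 'i cmat" where
  "mmult A B = (\<lambda>i j. \<Sum>k\<in>UNIV. A i k * B k j)"

definition mid :: "'i cmat" where
  "mid = (\<lambda>i j. if i = j then 1 else 0)"

primrec mpow :: "'i::finite cmat \<Rightarrow> nat \<Rightarrow> 'i cmat" where
  "mpow A 0 = mid"
| "mpow A (Suc n) = mmult A (mpow A n)"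

definition madjoint :: "'i cmat \<Rightarrow> 'i cmat" where
  "madjoint A = (\<lambda>i j. cnj (A j i))"

definition is_unitary :: "'i::finite cmat \<Rightarrow> bool" where
  "is_unitary U \<longleftrightarrow> mmult (madjoint U) U = mid \<and> mmult U (madjoint U) = mid"

definition mapply :: "'i::finite cmat \<Rightarrow> 'i cvec \<Rightarrow> 'i cvec" where
  "mapply A x = (\<lambda>i. \<Sum>j\<in>UNIV. A i j * x j)"

definition basis_state :: "'i \<Rightarrow> 'i cvec" where
  "basis_state b = (\<lambda>i. if i = b then 1 else 0)"

definition general_qwalk :: "('v \<Rightarrow> 'v \<Rightarrow> bool) \<Rightarrow> ('a::finite \<times> 'v::finite) cmat \<Rightarrow> bool" where
  "general_qwalk E U \<longleftrightarrow> is_unitary U \<and>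
     (\<forall>a v a' v'. U (a', v') (a, v) \<noteq> 0 \<longrightarrow> v' = v \<or> E v v')"

definition prob_t :: "('a::finite \<times> 'v::finite) cmat \<Rightarrow> nat \<Rightarrow> 'v \<Rightarrow> ('a \<times> 'v) cvec \<Rightarrow> real" where
  "prob_t U t v \<alpha> = (\<Sum>a\<in>UNIV. (cmod (mapply (mpow U t) \<alpha> (a, v)))\<^sup>2)"

definition avg_prob :: "('a::finite \<times> 'v::finite) cmat \<Rightarrow> nat \<Rightarrow> 'v \<Rightarrow> ('a \<times> 'v) cvec \<Rightarrow> real" where
  "avg_prob U T v \<alpha> = (1 / real T) * (\<Sum>t<T. prob_t U t v \<alpha>)"

end

theory Submission
  imports Defs
begin

lemma mmult_assoc: "mmult (mmult A B) C = mmult A (mmult B C)"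
  unfolding mmult_def
  by (auto simp: fun_eq_iff sum_distrib_left sum_distrib_right mult.assoc intro: sum.swap)

lemma mmult_mid_left: "mmult mid A = A"
proof -
  have "\<And>x j. (\<Sum>k\<in>UNIV. (if x = k then 1 else 0) * A k j) = A x j"
  proof -
    fix x j
    have eq: "(\<lambda>k. (if x = k then 1 else 0) * A k j) = (\<lambda>k. if x = k then A x j else 0)"
      by auto
    thus "(\<Sum>k\<in>UNIV. (if x = k then 1 else 0) * A k j) = A x j" by (subst eq) simp
  qed
  thus ?thesis unfolding mmult_def mid_def by (simp add: fun_eq_iff)
qed

lemma mmult_mid_right: "mmult A mid = A"
  unfolding mmult_def mid_def by (auto simp: fun_eq_iff if_distrib cong: if_cong)

lemma madjoint_mmult: "madjoint (mmult A B) = mmult (madjoint B) (madjoint A)"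
  unfolding mmult_def madjoint_def by (auto simp: fun_eq_iff mult.commute)

lemma unitary_mid: "is_unitary (mid :: 'i::finite cmat)"
proof -
  have "madjoint (mid :: 'i cmat) = mid" unfolding madjoint_def mid_def by (auto simp: fun_eq_iff)
  then show ?thesis unfolding is_unitary_def by (simp add: mmult_mid_left)
qed

lemma unitary_mmult:
  assumes "is_unitary A" "is_unitary B"
  shows "is_unitary (mmult A B)"
proof -
  have "mmult (madjoint (mmult A B)) (mmult A B)
      = mmult (madjoint B) (mmult (mmult (madjoint A) A) B)"
    by (simp add: madjoint_mmult mmult_assoc)
  also have "\<dots> = mid" using assms by (simp add: is_unitary_def mmult_mid_left)
  finally have 1: "mmult (madjoint (mmult A B)) (mmult A B) = mid" .
  have "mmult (mmult A B) (madjoint (mmult A B))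
      = mmult A (mmult (mmult B (madjoint B)) (madjoint A))"
    by (simp add: madjoint_mmult mmult_assoc)
  also have "\<dots> = mid" using assms by (simp add: is_unitary_def mmult_mid_left)
  finally show ?thesis using 1 unfolding is_unitary_def by simp
qed

lemma unitary_mpow: "is_unitary U \<Longrightarrow> is_unitary (mpow U t)"
  by (induction t) (auto simp: unitary_mid unitary_mmult)

lemma row_norm:
  assumes "is_unitary M"
  shows "(\<Sum>j\<in>UNIV. (cmod (M i j))\<^sup>2) = 1"
proof -
  have "mmult M (madjoint M) i i = 1" using assms unfolding is_unitary_def mid_def by simp
  hence "(\<Sum>k\<in>UNIV. M i k * cnj (M i k)) = 1" unfolding mmult_def madjoint_def by simp
  hence "(\<Sum>k\<in>UNIV. complex_of_real ((cmod (M i k))\<^sup>2)) = 1"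
    by (simp add: complex_norm_square del: of_real_power)
  hence "complex_of_real (\<Sum>k\<in>UNIV. (cmod (M i k))\<^sup>2) = 1" by simp
  thus ?thesis using of_real_eq_1_iff by blast
qed

lemma mapply_basis: "mapply M (basis_state b) i = M i b"
  unfolding mapply_def basis_state_def by (simp add: if_distrib cong: if_cong)

lemma prob_sum:
  fixes U :: "('a::finite \<times> 'v::finite) cmat"
  assumes "is_unitary U"
  shows "(\<Sum>p\<in>UNIV. prob_t U t w (basis_state p)) = real CARD('a)"
proof -
  have "(\<Sum>p\<in>UNIV. prob_t U t w (basis_state p))
      = (\<Sum>p\<in>UNIV. \<Sum>a\<in>UNIV. (cmod (mpow U t (a, w) p))\<^sup>2)"
    unfolding prob_t_def by (simp add: mapply_basis)
  also have "\<dots> = (\<Sum>a\<in>UNIV. \<Sum>p\<in>UNIV. (cmod (mpow U t (a, w) p))\<^sup>2)"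
    by (rule sum.swap)
  also have "\<dots> = (\<Sum>a\<in>(UNIV::'a set). 1)"
    using row_norm[OF unitary_mpow[OF assms]] by simp
  finally show ?thesis by simp
qed

theorem mainTheorem4:
  fixes E :: "'v::finite \<Rightarrow> 'v \<Rightarrow> bool"
    and U :: "('a::finite \<times> 'v) cmat"
    and \<pi> :: "'v \<Rightarrow> real"
  assumes sym: "\<And>u w. E u w \<longleftrightarrow> E w u"
    and walk: "general_qwalk E U"
    and pi_nonneg: "\<And>v. \<pi> v \<ge> 0"
    and pi_sum: "(\<Sum>v\<in>UNIV. \<pi> v) = 1"
    and lim: "\<And>a v w. (\<lambda>T. avg_prob U T w (basis_state (a, v))) \<longlonglongrightarrow> \<pi> w"
  shows "\<forall>v. \<pi> v = 1 / real (card (UNIV :: 'v set))"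
proof
  fix w
  have unit: "is_unitary U" using walk unfolding general_qwalk_def by simp
  have L1: "(\<lambda>T. \<Sum>p\<in>UNIV. avg_prob U T w (basis_state p)) \<longlonglongrightarrow> (\<Sum>p\<in>(UNIV::('a\<times>'v) set). \<pi> w)"
    by (rule tendsto_sum) (use lim in auto)
  have ev: "\<forall>\<^sub>F T in sequentially. (\<Sum>p\<in>UNIV. avg_prob U T w (basis_state p)) = real CARD('a)"
  proof (rule eventually_sequentiallyI[of 1])
    fix T :: nat assume "T \<ge> 1"
    have "(\<Sum>p\<in>UNIV. avg_prob U T w (basis_state p))
        = (1 / real T) * (\<Sum>t<T. \<Sum>p\<in>UNIV. prob_t U t w (basis_state p))"
      unfolding avg_prob_def by (simp add: sum_distrib_left sum.swap[of _ UNIV])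
    also have "\<dots> = (1 / real T) * (real T * real CARD('a))"
      by (simp add: prob_sum[OF unit])
    also have "\<dots> = real CARD('a)" using \<open>T \<ge> 1\<close> by simp
    finally show "(\<Sum>p\<in>UNIV. avg_prob U T w (basis_state p)) = real CARD('a)" .
  qed
  have L2: "(\<lambda>T. \<Sum>p\<in>UNIV. avg_prob U T w (basis_state p)) \<longlonglongrightarrow> real CARD('a)"
    using tendsto_eventually[OF ev] .
  have "(\<Sum>p\<in>(UNIV::('a\<times>'v) set). \<pi> w) = real CARD('a)"
    using LIMSEQ_unique[OF L1 L2] .
  hence "real CARD('a) * real CARD('v) * \<pi> w = real CARD('a)"
    by (simp add: card_prod mult.assoc)
  hence "real CARD('v) * \<pi> w = 1" by (simp add: mult.assoc)
  thus "\<pi> w = 1 / real (card (UNIV :: 'v set))"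
    by (simp add: field_simps)
qed

end
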